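(* Let $F:(M_1(c),g_1)\to(M_2,g_2)$ be a Riemannian submersion from a complex space form with $\dim M_1=n=2k$ onto a Riemannian manifold with $\dim M_2=m$ and fibre dimension $r=\dim\mathcal V_p>2$. Let $p\in M_1$, $\Pi\subset\mathcal V_p$ a $2$-plane, $\{V_1,\dots,V_r\}$ an orthonormal basis of $\mathcal V_p$ with $\Pi=\mathrm{span}\{V_1,V_2\}$, and $\{h_1,\dots,h_s\}$ an orthonormal basis of $\mathcal H_p$. Then $$\tau^{\ker F_*}_{\mathcal V}(p)-K^{\ker F_*}_{\mathcal V}(\Pi)\ge\frac12\Big\{\frac c4(r^2-r-2)+\frac{3c}4\big(\|Q\|^2-2\,g_1(V_1,QV_2)^2\big)-\frac{r^2(r-2)}{r-1}\|H\|^2\Big\},$$ with equality if and only if Condition (E) holds at $p$ for $\Pi$.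
   Context: A complex space form $M_1(c)$ is a Kähler manifold $(M_1,J,g_1)$ ($\nabla J=0$) of constant holomorphic sectional curvature $c$, whose curvature is $R(Z_1,Z_2)Z_3=\frac c4\{g_1(Z_2,Z_3)Z_1-g_1(Z_1,Z_3)Z_2\}+\frac c4\{g_1(Z_1,JZ_3)JZ_2-g_1(Z_2,JZ_3)JZ_1+2g_1(Z_1,JZ_2)JZ_3\}$. For a tangent vector $Z$ write $JZ=PZ+QZ$ with $PZ\in\mathcal H$, $QZ\in\mathcal V$, and $\|Q\|^2=\sum_{i,j=1}^r g_1(QV_i,V_j)^2$. Let $(M_1,g_1)$, $(M_2,g_2)$ be Riemannian manifolds, $\dim M_1=n$, $\dim M_2=m$, and $F:M_1\to M_2$ a Riemannian submersion (a surjective smooth map whose differential $F_{*p}$ is surjective at every $p$ and preserves the length of horizontal vectors). Write $\mathcal V=\ker F_*$ (vertical distribution), $\mathcal H=(\ker F_* )^\perp$ (horizontal distribution), $r=\dim\mathcal V_p=n-m$, $s=\dim\mathcal H_p=m$; $v,h$ denote the orthogonal projections onto $\mathcal V,\mathcal H$, and $\nabla$ the Levi-Civita connection of $g_1$. O'Neill's tensor: $\mathcal T_EF=h\nabla_{vE}vF+v\nabla_{vE}hF$. Curvature convention: $R^{M_1}(X,Y,Z,W)=g_1(R^{M_1}(X,Y)Z,W)$, normalized so that $R^{M_1}(X,Y,Y,X)$ is the sectional curvature of the plane spanned by orthonormal $X,Y$. The curvature $R^{\ker F_*}$ of the fibres is related to $R^{M_1}$ (as used in the paper) by: for vertical $F_1,\dots,F_4$,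 $R^{M_1}(F_1,F_2,F_3,F_4)=R^{\ker F_*}(F_1,F_2,F_3,F_4)+g_1(\mathcal T_{F_1}F_4,\mathcal T_{F_2}F_3)-g_1(\mathcal T_{F_2}F_4,\mathcal T_{F_1}F_3)$. With the chosen orthonormal bases at $p$: $(\mathcal T^{\mathcal H})^\ell_{ij}=g_1(\mathcal T_{V_i}V_j,h_\ell)$; the mean curvature vector of the fibres is $H=\frac1r\sum_{i=1}^r\mathcal T_{V_i}V_i$; $\tau^{\ker F_*}_{\mathcal V}(p)=\frac12\sum_{i,j=1}^rR^{\ker F_*}(V_i,V_j,V_j,V_i)$, $K^{\ker F_*}_{\mathcal V}(\Pi)=R^{\ker F_*}(V_1,V_2,V_2,V_1)$ for $\Pi=\mathrm{span}\{V_1,V_2\}$. Condition (E) at $p$ for $\Pi$: there exist orthonormal bases $\{V_1,\dots,V_r\}$ of $\mathcal V_p$ with $\Pi=\mathrm{span}\{V_1,V_2\}$ and $\{h_1,\dots,h_s\}$ of $\mathcal H_p$ with $h_1=H(p)/\|H(p)\|$ if $H(p)\neq0$ ($h_1$ arbitrary if $H(p)=0$), such that: $(\mathcal T^{\mathcal H})^\ell_{1j}=(\mathcal T^{\mathcal H})^\ell_{2j}=0$ for $j>2$, $\ell=1,\dots,s$; $(\mathcal T^{\mathcal H})^1_{ij}=0$ for $i\ne j$, $i,j>2$; $(\mathcal T^{\mathcal H})^\ell_{ij}=0$ for $i,j>2$, $\ell=2,\dots,s$; $(\mathcal T^{\mathcal H})^\ell_{11}+(\mathcal T^{\mathcal H})^\ell_{22}=0$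 for $\ell=2,\dots,s$; and $(\mathcal T^{\mathcal H})^1_{11}+(\mathcal T^{\mathcal H})^1_{22}=(\mathcal T^{\mathcal H})^1_{33}=\cdots=(\mathcal T^{\mathcal H})^1_{rr}$. *)

theory Defs
  imports "HOL-Analysis.Analysis"
begin

text \<open>Pointwise model: the tangent space T_p M1 is a finite-dimensional real inner
product space 'a (g1 = inner), Vs is the vertical space V_p, its orthogonal
complement is the horizontal space H_p.\<close>

definition vpart :: "'a::euclidean_space set \<Rightarrow> 'a \<Rightarrow> 'a" where
  "vpart Vs x = (THE w. w \<in> Vs \<and> x - w \<in> orthogonal_comp Vs)"

text \<open>Curvature tensor of a complex space form of constant holomorphic sectional curvature c:
R(Z1,Z2,Z3,Z4) = g1(R(Z1,Z2)Z3, Z4).\<close>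
definition csf_curv :: "real \<Rightarrow> ('a::euclidean_space \<Rightarrow> 'a) \<Rightarrow> 'a \<Rightarrow> 'a \<Rightarrow> 'a \<Rightarrow> 'a \<Rightarrow> real" where
  "csf_curv c J Z1 Z2 Z3 Z4 =
     inner ((c/4) *\<^sub>R (inner Z2 Z3 *\<^sub>R Z1 - inner Z1 Z3 *\<^sub>R Z2)
          + (c/4) *\<^sub>R (inner Z1 (J Z3) *\<^sub>R J Z2 - inner Z2 (J Z3) *\<^sub>R J Z1
                       + (2 * inner Z1 (J Z2)) *\<^sub>R J Z3)) Z4"

definition onb :: "(nat \<Rightarrow> 'a::euclidean_space) \<Rightarrow> nat \<Rightarrow> 'a set \<Rightarrow> bool" where
  "onb B k S \<longleftrightarrow> (\<forall>i\<in>{1..k}. B i \<in> S)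
     \<and> (\<forall>i\<in>{1..k}. \<forall>j\<in>{1..k}. inner (B i) (B j) = (if i = j then 1 else 0))
     \<and> span (B ` {1..k}) = S"

definition meancurv :: "('a::euclidean_space \<Rightarrow> 'a \<Rightarrow> 'a) \<Rightarrow> (nat \<Rightarrow> 'a) \<Rightarrow> nat \<Rightarrow> 'a" where
  "meancurv T V r = (1 / real r) *\<^sub>R (\<Sum>i\<in>{1..r}. T (V i) (V i))"

definition condE :: "'a::euclidean_space set \<Rightarrow> ('a \<Rightarrow> 'a \<Rightarrow> 'a) \<Rightarrow> nat \<Rightarrow> nat \<Rightarrow> 'a set \<Rightarrow> 'a \<Rightarrow> bool" where
  "condE Vs T r s Pl Hv \<longleftrightarrow>
    (\<exists>Vb hb. onb Vb r Vs \<and> onb hb s (orthogonal_comp Vs) \<and> span {Vb 1, Vb 2} = Pl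
      \<and> (Hv \<noteq> 0 \<longrightarrow> hb 1 = (1 / norm Hv) *\<^sub>R Hv)
      \<and> (let t = (\<lambda>l i j. inner (T (Vb i) (Vb j)) (hb l)) in
          (\<forall>l\<in>{1..s}. \<forall>j\<in>{3..r}. t l 1 j = 0 \<and> t l 2 j = 0)
        \<and> (\<forall>i\<in>{3..r}. \<forall>j\<in>{3..r}. i \<noteq> j \<longrightarrow> t 1 i j = 0)
        \<and> (\<forall>l\<in>{2..s}. \<forall>i\<in>{3..r}. \<forall>j\<in>{3..r}. t l i j = 0)
        \<and> (\<forall>l\<in>{2..s}. t l 1 1 + t l 2 2 = 0)
        \<and> (\<forall>j\<in>{3..r}. t 1 1 1 + t 1 2 2 = t 1 j j)))"

end

theory Submission
  imports Defs
begin

lemma onb_in: "onb B k S \<Longrightarrow> i \<in> {1..k} \<Longrightarrow> B i \<in> S"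
  by (simp add: onb_def)

lemma onb_inner: "onb B k S \<Longrightarrow> i \<in> {1..k} \<Longrightarrow> j \<in> {1..k} \<Longrightarrow> inner (B i) (B j) = (if i = j then 1 else 0)"
  by (simp add: onb_def)

lemma onb_expand:
  assumes B: "onb B k S" and S: "subspace S" and x: "x \<in> S"
  shows "x = (\<Sum>i\<in>{1..k}. (inner x (B i)) *\<^sub>R B i)"
proof -
  define y where "y = x - (\<Sum>i\<in>{1..k}. (inner x (B i)) *\<^sub>R B i)"
  have yS: "y \<in> S" unfolding y_def
    using S x onb_in[OF B] by (intro subspace_diff subspace_sum subspace_scale) auto
  have orth: "inner y (B j) = 0" if j: "j \<in> {1..k}" for j
  proof -
    have "inner (\<Sum>i\<in>{1..k}. (inner x (B i)) *\<^sub>R B i) (B j)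
        = (\<Sum>i\<in>{1..k}. inner x (B i) * (if i = j then 1 else 0))"
      by (simp add: inner_sum_left onb_inner[OF B _ j])
    also have "\<dots> = inner x (B j)" using j by (simp add: if_distrib cong: if_cong)
    finally show ?thesis by (simp add: y_def inner_diff_left)
  qed
  have "y \<in> span (B ` {1..k})" using B yS by (simp add: onb_def)
  then have "orthogonal y y"
    by (rule orthogonal_to_span) (use orth in \<open>auto simp: orthogonal_def\<close>)
  then have "y = 0" by (simp add: orthogonal_def)
  then show ?thesis by (simp add: y_def)
qed

lemma onb_parseval:
  assumes B: "onb B k S" and S: "subspace S" and x: "x \<in> S"
  shows "inner x y = (\<Sum>i\<in>{1..k}. inner x (B i) * inner y (B i))"
proof -
  have "inner x y = inner (\<Sum>i\<in>{1..k}. (inner x (B i)) *\<^sub>R B i) y"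
    using onb_expand[OF B S x] by simp
  also have "\<dots> = (\<Sum>i\<in>{1..k}. inner x (B i) * inner y (B i))"
    by (simp add: inner_sum_left) (rule sum.cong, auto simp: inner_commute)
  finally show ?thesis .
qed

lemma lin_sq_inv:
  fixes g :: "'a::euclidean_space \<Rightarrow> real"
  assumes W: "onb W k S" and V: "onb V k S" and S: "subspace S" and g: "linear g"
  shows "(\<Sum>i\<in>{1..k}. (g (W i))\<^sup>2) = (\<Sum>i\<in>{1..k}. (g (V i))\<^sup>2)"
proof -
  define y where "y = (\<Sum>j\<in>{1..k}. g (V j) *\<^sub>R V j)"
  have yS: "y \<in> S" unfolding y_def
    using S onb_in[OF V] by (intro subspace_sum subspace_scale) auto
  have gx: "g x = inner x y" if x: "x \<in> S" for x
  proof -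
    have "g x = g (\<Sum>j\<in>{1..k}. (inner x (V j)) *\<^sub>R V j)"
      using onb_expand[OF V S x] by simp
    also have "\<dots> = (\<Sum>j\<in>{1..k}. inner x (V j) * g (V j))"
      by (simp add: linear_sum[OF g] linear_scale[OF g])
    also have "\<dots> = inner x y" by (simp add: y_def inner_sum_right mult.commute)
    finally show ?thesis .
  qed
  have "(\<Sum>i\<in>{1..k}. (g (W i))\<^sup>2) = (\<Sum>i\<in>{1..k}. inner y (W i) * inner y (W i))"
    using gx onb_in[OF W] by (intro sum.cong) (auto simp: power2_eq_square inner_commute)
  also have "\<dots> = inner y y" using onb_parseval[OF W S yS, of y] by simp
  also have "\<dots> = (\<Sum>i\<in>{1..k}. inner y (V i) * inner y (V i))" using onb_parseval[OF V S yS, of y] by simp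
  also have "\<dots> = (\<Sum>i\<in>{1..k}. (g (V i))\<^sup>2)"
    using gx onb_in[OF V] by (intro sum.cong) (auto simp: power2_eq_square inner_commute)
  finally show ?thesis .
qed

lemma vec_sq_inv:
  fixes f :: "'a::euclidean_space \<Rightarrow> 'b::euclidean_space"
  assumes W: "onb W k S" and V: "onb V k S" and S: "subspace S" and f: "linear f"
  shows "(\<Sum>i\<in>{1..k}. (norm (f (W i)))\<^sup>2) = (\<Sum>i\<in>{1..k}. (norm (f (V i)))\<^sup>2)"
proof -
  have lb: "linear (\<lambda>x. inner (f x) b)" for b
    using f by (simp add: linear_iff inner_add_left)
  have e: "(norm z)\<^sup>2 = (\<Sum>b\<in>Basis. (inner z b)\<^sup>2)" for z :: 'b
    unfolding power2_norm_eq_inner by (subst euclidean_inner) (simp add: power2_eq_square)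
  have "(\<Sum>i\<in>{1..k}. (norm (f (W i)))\<^sup>2) = (\<Sum>b\<in>Basis. \<Sum>i\<in>{1..k}. (inner (f (W i)) b)\<^sup>2)"
    by (simp add: e sum.swap[of _ Basis])
  also have "\<dots> = (\<Sum>b\<in>Basis. \<Sum>i\<in>{1..k}. (inner (f (V i)) b)\<^sup>2)"
    using lin_sq_inv[OF W V S lb] by simp
  also have "\<dots> = (\<Sum>i\<in>{1..k}. (norm (f (V i)))\<^sup>2)"
    by (simp add: e sum.swap[of _ Basis])
  finally show ?thesis .
qed

lemma trace_inv:
  assumes W: "onb W k S" and V: "onb V k S" and S: "subspace S" and T: "bilinear T"
  shows "(\<Sum>i\<in>{1..k}. T (W i) (W i)) = (\<Sum>i\<in>{1..k}. T (V i) (V i))"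
proof -
  have l1: "linear (\<lambda>x. T x y)" for y using T by (simp add: bilinear_def)
  have l2: "linear (T x)" for x using T by (simp add: bilinear_def)
  have "(\<Sum>i\<in>{1..k}. T (W i) (W i)) = (\<Sum>i\<in>{1..k}. T (W i) (\<Sum>j\<in>{1..k}. (inner (W i) (V j)) *\<^sub>R V j))"
    using onb_expand[OF V S] onb_in[OF W] by (intro sum.cong) auto
  also have "\<dots> = (\<Sum>i\<in>{1..k}. \<Sum>j\<in>{1..k}. (inner (W i) (V j)) *\<^sub>R T (W i) (V j))"
    by (simp add: linear_sum[OF l2] linear_scale[OF l2])
  also have "\<dots> = (\<Sum>j\<in>{1..k}. \<Sum>i\<in>{1..k}. (inner (V j) (W i)) *\<^sub>R T (W i) (V j))"
    by (subst sum.swap) (simp add: inner_commute)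
  also have "\<dots> = (\<Sum>j\<in>{1..k}. T (\<Sum>i\<in>{1..k}. (inner (V j) (W i)) *\<^sub>R W i) (V j))"
    by (simp add: linear_sum[OF l1] linear_scale[OF l1])
  also have "\<dots> = (\<Sum>j\<in>{1..k}. T (V j) (V j))"
    using onb_expand[OF W S] onb_in[OF V] by (intro sum.cong) auto
  finally show ?thesis .
qed

lemma split12: "2 \<le> (r::nat) \<Longrightarrow> (\<Sum>i\<in>{1..r}. g i) = g 1 + g 2 + (\<Sum>i\<in>{3..r}. g i)"
proof -
  assume r: "2 \<le> r"
  have "{1..r} = insert 1 (insert 2 {3..r})" using r by auto
  then show ?thesis by (simp add: add.assoc)
qed

lemma cs_id:
  fixes x :: "nat \<Rightarrow> 'a::real_inner"
  assumes I: "finite I"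
  shows "(norm (A - c))\<^sup>2 + (\<Sum>i\<in>I. (norm (x i - c))\<^sup>2)
    = (norm A)\<^sup>2 + (\<Sum>i\<in>I. (norm (x i))\<^sup>2) - 2 * inner (A + (\<Sum>i\<in>I. x i)) c + (real (card I) + 1) * (norm c)\<^sup>2"
proof -
  have e: "(norm (y - c))\<^sup>2 = (norm y)\<^sup>2 - 2 * inner y c + (norm c)\<^sup>2" for y :: 'a
    by (simp add: power2_norm_eq_inner inner_diff_left inner_diff_right inner_commute)
  have "(\<Sum>i\<in>I. (norm (x i - c))\<^sup>2) = (\<Sum>i\<in>I. (norm (x i))\<^sup>2) - 2 * (\<Sum>i\<in>I. inner (x i) c) + real (card I) * (norm c)\<^sup>2"
    by (simp add: e sum.distrib sum_subtractf sum_distrib_left)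
  then show ?thesis by (simp add: e inner_add_left inner_sum_left algebra_simps)
qed

lemma deficit_identity:
  fixes t :: "nat \<Rightarrow> nat \<Rightarrow> 'a::real_inner"
  assumes r: "r > 2" and sym: "\<forall>i\<in>{1..r}. \<forall>j\<in>{1..r}. t i j = t j i"
  defines "m \<equiv> real r - 1"
  defines "A \<equiv> t 1 1 + t 2 2"
  defines "S \<equiv> (\<Sum>i\<in>{1..r}. t i i)"
  shows "(\<Sum>i\<in>{1..r}. \<Sum>j\<in>{1..r}. (norm (t i j))\<^sup>2) + 2 * inner (t 1 1) (t 2 2) - 2 * (norm (t 1 2))\<^sup>2
           - (norm S)\<^sup>2 / m
       = (norm (A - (1/m) *\<^sub>R S))\<^sup>2 + (\<Sum>i\<in>{3..r}. (norm (t i i - (1/m) *\<^sub>R S))\<^sup>2)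
         + 2 * (\<Sum>j\<in>{3..r}. (norm (t 1 j))\<^sup>2 + (norm (t 2 j))\<^sup>2)
         + (\<Sum>i\<in>{3..r}. \<Sum>j\<in>{3..r}. if i = j then 0 else (norm (t i j))\<^sup>2)"
proof -
  define f where "f i j = (norm (t i j))\<^sup>2" for i j
  have r2: "2 \<le> r" using r by simp
  have m: "m > 0" using r by (simp add: m_def)
  have cardI: "real (card {3..r}) + 1 = m" using r by (simp add: m_def of_nat_diff)
  have SA: "S = A + (\<Sum>i\<in>{3..r}. t i i)" unfolding S_def A_def by (rule split12[OF r2])
  have f21: "f 2 1 = f 1 2" using sym r by (simp add: f_def)
  have fi12: "(\<Sum>i\<in>{3..r}. f i 1 + f i 2) = (\<Sum>j\<in>{3..r}. f 1 j + f 2 j)"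
    using sym by (intro sum.cong) (auto simp: f_def)
  have diag: "(\<Sum>j\<in>{3..r}. f i j) = f i i + (\<Sum>j\<in>{3..r}. if i = j then 0 else f i j)"
    if i: "i \<in> {3..r}" for i
  proof -
    have "(\<Sum>j\<in>{3..r}. f i j) = (\<Sum>j\<in>{3..r}. (if i = j then f i i else 0) + (if i = j then 0 else f i j))"
      by (intro sum.cong) auto
    also have "\<dots> = f i i + (\<Sum>j\<in>{3..r}. if i = j then 0 else f i j)"
      using i by (simp add: sum.distrib)
    finally show ?thesis .
  qed
  have D: "(\<Sum>i\<in>{3..r}. \<Sum>j\<in>{3..r}. f i j) = (\<Sum>i\<in>{3..r}. f i i) + (\<Sum>i\<in>{3..r}. \<Sum>j\<in>{3..r}. if i = j then 0 else f i j)"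
  proof -
    have "(\<Sum>i\<in>{3..r}. \<Sum>j\<in>{3..r}. f i j) = (\<Sum>i\<in>{3..r}. f i i + (\<Sum>j\<in>{3..r}. if i = j then 0 else f i j))"
      by (rule sum.cong[OF refl]) (rule diag)
    then show ?thesis by (simp add: sum.distrib)
  qed
  have N: "(\<Sum>i\<in>{1..r}. \<Sum>j\<in>{1..r}. f i j)
     = f 1 1 + f 2 2 + 2 * f 1 2 + 2 * (\<Sum>j\<in>{3..r}. f 1 j + f 2 j) + (\<Sum>i\<in>{3..r}. f i i)
       + (\<Sum>i\<in>{3..r}. \<Sum>j\<in>{3..r}. if i = j then 0 else f i j)"
  proof -
    have "(\<Sum>i\<in>{1..r}. \<Sum>j\<in>{1..r}. f i j) = (\<Sum>i\<in>{1..r}. f i 1 + f i 2 + (\<Sum>j\<in>{3..r}. f i j))"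
      by (rule sum.cong[OF refl], rule split12[OF r2])
    also have "\<dots> = (f 1 1 + f 1 2 + (\<Sum>j\<in>{3..r}. f 1 j)) + (f 2 1 + f 2 2 + (\<Sum>j\<in>{3..r}. f 2 j))
        + (\<Sum>i\<in>{3..r}. f i 1 + f i 2 + (\<Sum>j\<in>{3..r}. f i j))"
      by (rule split12[OF r2])
    also have "(\<Sum>i\<in>{3..r}. f i 1 + f i 2 + (\<Sum>j\<in>{3..r}. f i j))
        = (\<Sum>i\<in>{3..r}. f i 1 + f i 2) + (\<Sum>i\<in>{3..r}. f i i) + (\<Sum>i\<in>{3..r}. \<Sum>j\<in>{3..r}. if i = j then 0 else f i j)"
      by (simp add: sum.distrib D)
    finally show ?thesis using f21 fi12 by (simp add: sum.distrib algebra_simps)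
  qed
  have A2: "(norm A)\<^sup>2 = f 1 1 + f 2 2 + 2 * inner (t 1 1) (t 2 2)"
    by (simp add: A_def f_def power2_norm_eq_inner inner_add_left inner_add_right inner_commute)
  have CS: "(norm (A - (1/m) *\<^sub>R S))\<^sup>2 + (\<Sum>i\<in>{3..r}. (norm (t i i - (1/m) *\<^sub>R S))\<^sup>2)
     = (norm A)\<^sup>2 + (\<Sum>i\<in>{3..r}. f i i) - (norm S)\<^sup>2 / m"
  proof -
    have "(norm (A - (1/m) *\<^sub>R S))\<^sup>2 + (\<Sum>i\<in>{3..r}. (norm (t i i - (1/m) *\<^sub>R S))\<^sup>2)
      = (norm A)\<^sup>2 + (\<Sum>i\<in>{3..r}. f i i) - 2 * inner S ((1/m) *\<^sub>R S) + m * (norm ((1/m) *\<^sub>R S))\<^sup>2"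
      using cs_id[of "{3..r}" A "(1/m) *\<^sub>R S" "\<lambda>i. t i i", unfolded cardI SA[symmetric]] by (simp add: f_def)
    also have "\<dots> = (norm A)\<^sup>2 + (\<Sum>i\<in>{3..r}. f i i) - (norm S)\<^sup>2 / m"
      using m by (simp add: power2_norm_eq_inner power2_eq_square field_simps flip: power2_norm_eq_inner)
    finally show ?thesis .
  qed
  show ?thesis
    using N A2 CS unfolding f_def[symmetric] by (simp add: algebra_simps)
qed

lemma deficit_main:
  fixes t :: "nat \<Rightarrow> nat \<Rightarrow> 'a::real_inner"
  assumes r: "r > 2" and sym: "\<forall>i\<in>{1..r}. \<forall>j\<in>{1..r}. t i j = t j i"
  defines "D \<equiv> (\<Sum>i\<in>{1..r}. \<Sum>j\<in>{1..r}. (norm (t i j))\<^sup>2) + 2 * inner (t 1 1) (t 2 2) - 2 * (norm (t 1 2))\<^sup>2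
           - (norm (\<Sum>i\<in>{1..r}. t i i))\<^sup>2 / (real r - 1)"
  shows "D \<ge> 0 \<and> (D = 0 \<longleftrightarrow>
     ((\<forall>j\<in>{3..r}. t 1 j = 0 \<and> t 2 j = 0) \<and> (\<forall>i\<in>{3..r}. \<forall>j\<in>{3..r}. i \<noteq> j \<longrightarrow> t i j = 0)
      \<and> (\<forall>j\<in>{3..r}. t 1 1 + t 2 2 = t j j)))"
proof -
  define m where "m = real r - 1"
  define A where "A = t 1 1 + t 2 2"
  define S where "S = (\<Sum>i\<in>{1..r}. t i i)"
  define P1 where "P1 = (norm (A - (1/m) *\<^sub>R S))\<^sup>2"
  define P2 where "P2 = (\<Sum>i\<in>{3..r}. (norm (t i i - (1/m) *\<^sub>R S))\<^sup>2)"
  define P3 where "P3 = (\<Sum>j\<in>{3..r}. (norm (t 1 j))\<^sup>2 + (norm (t 2 j))\<^sup>2)"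
  define P4 where "P4 = (\<Sum>i\<in>{3..r}. \<Sum>j\<in>{3..r}. if i = j then 0 else (norm (t i j))\<^sup>2)"
  have Deq: "D = P1 + P2 + 2 * P3 + P4"
    using deficit_identity[OF r sym] unfolding D_def P1_def P2_def P3_def P4_def m_def A_def S_def
    by simp
  have n1: "P1 \<ge> 0" "P2 \<ge> 0" "P3 \<ge> 0" "P4 \<ge> 0"
    unfolding P1_def P2_def P3_def P4_def by (auto intro!: sum_nonneg)
  have r2: "2 \<le> r" using r by simp
  have m: "m > 0" using r by (simp add: m_def)
  have SA: "S = A + (\<Sum>i\<in>{3..r}. t i i)" unfolding S_def A_def by (rule split12[OF r2])
  let ?E = "((\<forall>j\<in>{3..r}. t 1 j = 0 \<and> t 2 j = 0) \<and> (\<forall>i\<in>{3..r}. \<forall>j\<in>{3..r}. i \<noteq> j \<longrightarrow> t i j = 0)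
      \<and> (\<forall>j\<in>{3..r}. t 1 1 + t 2 2 = t j j))"
  have "D = 0 \<longleftrightarrow> ?E"
  proof
    assume "D = 0"
    then have z: "P1 = 0" "P2 = 0" "P3 = 0" "P4 = 0" using n1 Deq by linarith+
    have a: "A = (1/m) *\<^sub>R S" using z(1) by (simp add: P1_def)
    have b: "t j j = (1/m) *\<^sub>R S" if "j \<in> {3..r}" for j
      using z(2) that unfolding P2_def by (subst (asm) sum_nonneg_eq_0_iff) auto
    have c: "t 1 j = 0 \<and> t 2 j = 0" if "j \<in> {3..r}" for j
    proof -
      have "(norm (t 1 j))\<^sup>2 + (norm (t 2 j))\<^sup>2 = 0"
        using z(3) that unfolding P3_def by (subst (asm) sum_nonneg_eq_0_iff) auto
      then show ?thesis by (simp add: add_nonneg_eq_0_iff)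
    qed
    have d: "t i j = 0" if "i \<in> {3..r}" "j \<in> {3..r}" "i \<noteq> j" for i j
    proof -
      have "(\<Sum>j\<in>{3..r}. if i = j then 0 else (norm (t i j))\<^sup>2) = 0"
        using z(4) that(1) unfolding P4_def by (subst (asm) sum_nonneg_eq_0_iff) (auto intro!: sum_nonneg)
      then have "(if i = j then 0 else (norm (t i j))\<^sup>2) = 0"
        using that(2) by (subst (asm) sum_nonneg_eq_0_iff) auto
      then show ?thesis using that(3) by simp
    qed
    show ?E using a b c d by (simp add: A_def)
  next
    assume E: ?E
    have "(\<Sum>i\<in>{3..r}. t i i) = (\<Sum>i\<in>{3..r}. A)" using E by (simp add: A_def)
    then have "S = A + real (r - 2) *\<^sub>R A" using SA by (simp add: sum_constant_scaleR)
    also have "\<dots> = m *\<^sub>R A" using r by (simp add: m_def of_nat_diff scaleR_diff_left scaleR_2)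
    finally have "S = m *\<^sub>R A" .
    then have AS: "(1/m) *\<^sub>R S = A" using m by simp
    have "P1 = 0" by (simp add: P1_def AS)
    moreover have "P2 = 0" unfolding P2_def AS using E by (simp add: A_def)
    moreover have "P3 = 0" unfolding P3_def using E by simp
    moreover have "P4 = 0" unfolding P4_def using E by (auto intro!: sum.neutral)
    ultimately show "D = 0" using Deq by simp
  qed
  then show ?thesis using Deq n1 by simp
qed

lemma vpart_prop:
  fixes Vs :: "'a::euclidean_space set"
  assumes S: "subspace Vs"
  shows "vpart Vs x \<in> Vs \<and> x - vpart Vs x \<in> orthogonal_comp Vs"
proof -
  have sp: "span Vs = Vs" using S by (simp add: span_eq_iff)
  have "\<exists>y z. y \<in> span Vs \<and> (\<forall>w\<in>span Vs. orthogonal z w) \<and> x = y + z"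
    by (metis orthogonal_subspace_decomp_exists)
  then obtain y z where y: "y \<in> span Vs" and z: "\<And>w. w \<in> span Vs \<Longrightarrow> orthogonal z w" and xyz: "x = y + z"
    by blast
  have ex: "y \<in> Vs \<and> x - y \<in> orthogonal_comp Vs"
  proof -
    have "y \<in> Vs" using y sp by simp
    moreover have "x - y = z" using xyz by simp
    moreover have "\<forall>w\<in>Vs. orthogonal w z" using z sp orthogonal_commute by blast
    ultimately show ?thesis by (simp add: orthogonal_comp_def)
  qed
  have un: "w = y" if w: "w \<in> Vs \<and> x - w \<in> orthogonal_comp Vs" for w
  proof -
    have d1: "w - y \<in> Vs" using w ex S by (simp add: subspace_diff)
    have "(x - y) - (x - w) \<in> orthogonal_comp Vs"
      using w ex subspace_orthogonal_comp by (blast intro: subspace_diff)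
    then have "w - y \<in> orthogonal_comp Vs" by (simp add: algebra_simps)
    then have "orthogonal (w - y) (w - y)" using d1 by (simp add: orthogonal_comp_def)
    then show ?thesis by (simp add: orthogonal_def)
  qed
  have "vpart Vs x = y" unfolding vpart_def
    by (rule the_equality[where P="\<lambda>w. w \<in> Vs \<and> x - w \<in> orthogonal_comp Vs", OF ex un])
  then show ?thesis using ex by simp
qed

lemma vpart_inner:
  fixes Vs :: "'a::euclidean_space set"
  assumes S: "subspace Vs" and v: "v \<in> Vs"
  shows "inner (vpart Vs x) v = inner x v"
proof -
  have "x - vpart Vs x \<in> orthogonal_comp Vs" using vpart_prop[OF S] by blast
  then have "inner v (x - vpart Vs x) = 0" using v by (simp add: orthogonal_comp_def orthogonal_def)
  then show ?thesis by (simp add: inner_diff_right inner_commute)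
qed

lemma J_self:
  assumes J_sq: "\<forall>x. J (J x) = - x" and J_isom: "\<forall>x y. inner (J x) (J y) = inner x y"
  shows "inner x (J x) = 0"
proof -
  have "inner (J x) (J (J x)) = inner x (J x)" using J_isom by simp
  then have "- inner (J x) x = inner x (J x)" using J_sq by simp
  then show ?thesis by (simp add: inner_commute)
qed

lemma csf_diag:
  assumes J_sq: "\<forall>x. J (J x) = - x" and J_isom: "\<forall>x y. inner (J x) (J y) = inner x y"
  shows "csf_curv c J x y y x = c/4 * (inner y y * inner x x - (inner x y)\<^sup>2) + 3*c/4 * (inner x (J y))\<^sup>2"
  using J_self[OF J_sq J_isom, of y]
  by (simp add: csf_curv_def inner_add_left inner_diff_left inner_commute power2_eq_square algebra_simps)

lemma ip3:
  "inner (x1 *\<^sub>R P + y1 *\<^sub>R Q + z1 *\<^sub>R R) (x2 *\<^sub>R P + y2 *\<^sub>R Q + z2 *\<^sub>R R)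
   = x1*x2*inner P P + (x1*y2 + y1*x2)*inner P Q + (x1*z2+z1*x2)*inner P R + y1*y2*inner Q Q
     + (y1*z2+z1*y2)*inner Q R + z1*z2*inner R R"
  by (simp add: inner_add_left inner_add_right inner_commute algebra_simps)

lemma plane_inv:
  assumes T: "bilinear T" and sy: "T v2 v1 = T v1 v2"
  shows "inner (T (a *\<^sub>R v1 + b *\<^sub>R v2) (a *\<^sub>R v1 + b *\<^sub>R v2)) (T (c *\<^sub>R v1 + d *\<^sub>R v2) (c *\<^sub>R v1 + d *\<^sub>R v2))
     - (norm (T (a *\<^sub>R v1 + b *\<^sub>R v2) (c *\<^sub>R v1 + d *\<^sub>R v2)))\<^sup>2
   = (a*d - b*c)\<^sup>2 * (inner (T v1 v1) (T v2 v2) - (norm (T v1 v2))\<^sup>2)"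
proof -
  define P where "P = T v1 v1"
  define Q where "Q = T v1 v2"
  define R where "R = T v2 v2"
  have e: "T (a *\<^sub>R v1 + b *\<^sub>R v2) (c *\<^sub>R v1 + d *\<^sub>R v2) = (a*c) *\<^sub>R P + (a*d + b*c) *\<^sub>R Q + (b*d) *\<^sub>R R"
    for a b c d
    using sy by (simp add: bilinear_ladd[OF T] bilinear_radd[OF T] bilinear_lmul[OF T] bilinear_rmul[OF T]
        P_def Q_def R_def algebra_simps scaleR_add_left)
  have "inner (T (a *\<^sub>R v1 + b *\<^sub>R v2) (a *\<^sub>R v1 + b *\<^sub>R v2)) (T (c *\<^sub>R v1 + d *\<^sub>R v2) (c *\<^sub>R v1 + d *\<^sub>R v2))
     - (norm (T (a *\<^sub>R v1 + b *\<^sub>R v2) (c *\<^sub>R v1 + d *\<^sub>R v2)))\<^sup>2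
     = (a*a)*(c*c)*inner P P + ((a*a)*(c*d+d*c) + (a*b+b*a)*(c*c))*inner P Q + ((a*a)*(d*d)+(b*b)*(c*c))*inner P R
       + (a*b+b*a)*(c*d+d*c)*inner Q Q + ((a*b+b*a)*(d*d)+(b*b)*(c*d+d*c))*inner Q R + (b*b)*(d*d)*inner R R
       - ((a*c)*(a*c)*inner P P + ((a*c)*(a*d+b*c) + (a*d+b*c)*(a*c))*inner P Q + ((a*c)*(b*d)+(b*d)*(a*c))*inner P R
       + (a*d+b*c)*(a*d+b*c)*inner Q Q + ((a*d+b*c)*(b*d)+(b*d)*(a*d+b*c))*inner Q R + (b*d)*(b*d)*inner R R)"
    unfolding e power2_norm_eq_inner ip3 ..
  also have "\<dots> = (a*d - b*c)\<^sup>2 * (inner P R - inner Q Q)"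
    by (simp add: power2_eq_square algebra_simps)
  finally show ?thesis by (simp add: P_def Q_def R_def power2_norm_eq_inner)
qed

lemma onb_first:
  fixes W :: "'a::euclidean_space set"
  assumes W: "subspace W" and u: "u \<in> W" and nu: "norm u = 1"
  shows "\<exists>B. onb B (dim W) W \<and> B 1 = u"
proof -
  define W' where "W' = W \<inter> orthogonal_comp {u}"
  have W': "subspace W'" unfolding W'_def by (intro subspace_inter W subspace_orthogonal_comp)
  obtain B0 where B0W: "B0 \<subseteq> W'" and B0o: "pairwise orthogonal B0" and B0n: "\<And>x. x \<in> B0 \<Longrightarrow> norm x = 1"
    and B0i: "independent B0" and B0c: "card B0 = dim W'" and B0s: "span B0 = W'"
    by (rule orthonormal_basis_subspace[OF W']) blast
  have fin: "finite B0" using B0i independent_imp_finite by blast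
  define n0 where "n0 = card B0"
  obtain f where f: "bij_betw f {0..<n0} B0" using ex_bij_betw_nat_finite[OF fin] n0_def by blast
  define B where "B i = (if i = 1 then u else f (i - 2))" for i
  have uu: "inner u u = 1" using nu by (simp add: norm_eq_1)
  have uB0: "inner u v = 0" if "v \<in> B0" for v
    using that B0W by (auto simp: W'_def orthogonal_comp_def orthogonal_def)
  have unB0: "u \<notin> B0" using uB0 uu by force
  have img: "B ` {1..n0+1} = insert u B0"
  proof
    show "B ` {1..n0+1} \<subseteq> insert u B0"
    proof
      fix y assume "y \<in> B ` {1..n0+1}"
      then obtain i where i: "i \<in> {1..n0+1}" "y = B i" by blast
      show "y \<in> insert u B0"
      proof (cases "i = 1")
        case True then show ?thesis using i by (simp add: B_def)
      next
        case False
        then have "i - 2 \<in> {0..<n0}" using i by auto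
        then show ?thesis using i False f by (auto simp: B_def bij_betw_def)
      qed
    qed
    show "insert u B0 \<subseteq> B ` {1..n0+1}"
    proof
      fix y assume y: "y \<in> insert u B0"
      show "y \<in> B ` {1..n0+1}"
      proof (cases "y = u")
        case True then show ?thesis by (force simp: B_def)
      next
        case False
        then have "y \<in> B0" using y by simp
        then obtain j where j: "j \<in> {0..<n0}" "y = f j" using f by (auto simp: bij_betw_def)
        then have "B (j + 2) = y" by (simp add: B_def)
        moreover have "j + 2 \<in> {1..n0+1}" using j by auto
        ultimately show ?thesis by force
      qed
    qed
  qed
  have Bin: "B i \<in> W" if "i \<in> {1..n0+1}" for i
    using img that u B0W by (auto simp: W'_def)
  have Binner: "inner (B i) (B j) = (if i = j then 1 else 0)" if i: "i \<in> {1..n0+1}" and j: "j \<in> {1..n0+1}" for i j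
  proof (cases "i = 1")
    case True
    show ?thesis
    proof (cases "j = 1")
      case True then show ?thesis using \<open>i = 1\<close> uu by (simp add: B_def)
    next
      case False
      then have "f (j - 2) \<in> B0" using j f by (auto simp: bij_betw_def)
      then show ?thesis using \<open>i = 1\<close> False uB0 by (simp add: B_def)
    qed
  next
    case False
    have fi: "f (i - 2) \<in> B0" using i False f by (auto simp: bij_betw_def)
    show ?thesis
    proof (cases "j = 1")
      case True
      have "inner (f (i - 2)) u = 0" using uB0[OF fi] by (simp add: inner_commute)
      then show ?thesis using True False by (simp add: B_def)
    next
      case Fj: False
      have fj: "f (j - 2) \<in> B0" using j Fj f by (auto simp: bij_betw_def)
      show ?thesis
      proof (cases "i = j")
        case True then show ?thesis using fi B0n uu by (simp add: B_def False norm_eq_1)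
      next
        case ne: False
        have "i - 2 \<noteq> j - 2" using ne i j False Fj by auto
        moreover have "i - 2 \<in> {0..<n0}" "j - 2 \<in> {0..<n0}" using i j False Fj by auto
        ultimately have "f (i - 2) \<noteq> f (j - 2)" using f by (auto simp: bij_betw_def inj_on_def)
        then have "inner (f (i - 2)) (f (j - 2)) = 0"
          using B0o fi fj by (auto simp: pairwise_def orthogonal_def)
        then show ?thesis using ne False Fj by (simp add: B_def)
      qed
    qed
  qed
  have spanW: "span (insert u B0) = W"
  proof
    show "span (insert u B0) \<subseteq> W"
      using u B0W W by (intro span_minimal) (auto simp: W'_def)
    show "W \<subseteq> span (insert u B0)"
    proof
      fix x assume x: "x \<in> W"
      have "x - inner x u *\<^sub>R u \<in> W'"
        unfolding W'_def using x u W uu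
        by (auto simp: orthogonal_comp_def orthogonal_def inner_diff_right inner_commute intro: subspace_diff subspace_scale)
      then have "x - inner x u *\<^sub>R u \<in> span (insert u B0)" using B0s span_mono[of B0 "insert u B0"] by blast
      moreover have "inner x u *\<^sub>R u \<in> span (insert u B0)" by (intro span_mul span_base) simp
      ultimately have "(x - inner x u *\<^sub>R u) + inner x u *\<^sub>R u \<in> span (insert u B0)" by (rule span_add)
      then show "x \<in> span (insert u B0)" by simp
    qed
  qed
  have indep: "independent (insert u B0)"
  proof (rule pairwise_orthogonal_independent)
    show "pairwise orthogonal (insert u B0)"
      using B0o uB0 by (auto simp: pairwise_insert orthogonal_def inner_commute)
    show "0 \<notin> insert u B0" using nu B0n by force
  qed
  have dimW: "dim W = n0 + 1"
  proof -
    have "card (insert u B0) = dim W"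
      using spanW indep u B0W by (intro basis_card_eq_dim) (auto simp: W'_def)
    then show ?thesis using fin unB0 by (simp add: n0_def)
  qed
  have "onb B (dim W) W"
    unfolding onb_def dimW using Bin Binner img spanW by auto
  moreover have "B 1 = u" by (simp add: B_def)
  ultimately show ?thesis by blast
qed

theorem mainTheorem4:
  fixes J :: "'a::euclidean_space \<Rightarrow> 'a" and c :: real and Vs Pl :: "'a set"
    and T :: "'a \<Rightarrow> 'a \<Rightarrow> 'a" and Rk :: "'a \<Rightarrow> 'a \<Rightarrow> 'a \<Rightarrow> 'a \<Rightarrow> real"
    and r s :: nat and V h :: "nat \<Rightarrow> 'a"
  assumes J_lin: "linear J"
    and J_sq: "\<forall>x. J (J x) = - x"
    and J_isom: "\<forall>x y. inner (J x) (J y) = inner x y"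
    and Vs_sub: "subspace Vs"
    and r_def: "r = dim Vs"
    and s_def: "s = dim (orthogonal_comp Vs)"
    and r_gt: "r > 2"
    and T_bil: "bilinear T"
    and T_vert: "\<forall>U\<in>Vs. \<forall>W\<in>Vs. T U W \<in> orthogonal_comp Vs \<and> T U W = T W U"
    and Gauss: "\<forall>F1\<in>Vs. \<forall>F2\<in>Vs. \<forall>F3\<in>Vs. \<forall>F4\<in>Vs.
        csf_curv c J F1 F2 F3 F4 = Rk F1 F2 F3 F4
          + inner (T F1 F4) (T F2 F3) - inner (T F2 F4) (T F1 F3)"
    and V_onb: "onb V r Vs"
    and h_onb: "onb h s (orthogonal_comp Vs)"
    and Pi_def: "Pl = span {V 1, V 2}"
  shows "let Hv = meancurv T V r;
             Q2 = (\<Sum>i\<in>{1..r}. \<Sum>j\<in>{1..r}. (inner (vpart Vs (J (V i))) (V j))\<^sup>2);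
             tau = (1/2) * (\<Sum>i\<in>{1..r}. \<Sum>j\<in>{1..r}. Rk (V i) (V j) (V j) (V i));
             K = Rk (V 1) (V 2) (V 2) (V 1);
             rr = real r;
             bound = (1/2) * ((c/4) * (rr\<^sup>2 - rr - 2)
                       + (3*c/4) * (Q2 - 2 * (inner (V 1) (vpart Vs (J (V 2))))\<^sup>2)
                       - (rr\<^sup>2 * (rr - 2) / (rr - 1)) * (norm Hv)\<^sup>2)
         in tau - K \<ge> bound \<and> (tau - K = bound \<longleftrightarrow> condE Vs T r s Pl Hv)"
proof -
  define t where "t i j = T (V i) (V j)" for i j
  define Hv where "Hv = meancurv T V r"
  define S where "S = (\<Sum>i\<in>{1..r}. t i i)"
  define rr where "rr = real r"
  define N where "N = (\<Sum>i\<in>{1..r}. \<Sum>j\<in>{1..r}. (norm (t i j))\<^sup>2)"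
  define q where "q i j = (inner (J (V i)) (V j))\<^sup>2" for i j
  define Q2 where "Q2 = (\<Sum>i\<in>{1..r}. \<Sum>j\<in>{1..r}. (inner (vpart Vs (J (V i))) (V j))\<^sup>2)"
  define tau where "tau = (1/2) * (\<Sum>i\<in>{1..r}. \<Sum>j\<in>{1..r}. Rk (V i) (V j) (V j) (V i))"
  define K where "K = Rk (V 1) (V 2) (V 2) (V 1)"
  define g where "g = inner (V 1) (J (V 2))"
  define bound where "bound = (1/2) * ((c/4) * (rr\<^sup>2 - rr - 2)
                       + (3*c/4) * (Q2 - 2 * (inner (V 1) (vpart Vs (J (V 2))))\<^sup>2)
                       - (rr\<^sup>2 * (rr - 2) / (rr - 1)) * (norm Hv)\<^sup>2)"
  define D where "D = N + 2 * inner (t 1 1) (t 2 2) - 2 * (norm (t 1 2))\<^sup>2 - (norm S)\<^sup>2 / (real r - 1)"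
  have Vin: "V i \<in> Vs" if "i \<in> {1..r}" for i using V_onb that by (rule onb_in)
  have Vinner: "inner (V i) (V j) = (if i = j then 1 else 0)" if "i \<in> {1..r}" "j \<in> {1..r}" for i j
    using V_onb that by (rule onb_inner)
  have tsym: "\<forall>i\<in>{1..r}. \<forall>j\<in>{1..r}. t i j = t j i" using T_vert Vin by (auto simp: t_def)
  have r2: "2 \<le> r" using r_gt by simp
  have rr2: "rr > 2" using r_gt by (simp add: rr_def)
  have i1: "1 \<in> {1..r}" and i2: "2 \<in> {1..r}" using r_gt by auto
  have HS: "Hv = (1/rr) *\<^sub>R S" by (simp add: Hv_def meancurv_def S_def t_def rr_def)
  have nH: "(norm Hv)\<^sup>2 = (norm S)\<^sup>2 / rr\<^sup>2" using rr2 by (simp add: HS power_divide)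
  have Rk_ij: "Rk (V i) (V j) (V j) (V i) = csf_curv c J (V i) (V j) (V j) (V i) - inner (t i i) (t j j) + (norm (t i j))\<^sup>2"
    if ij: "i \<in> {1..r}" "j \<in> {1..r}" for i j
  proof -
    have "csf_curv c J (V i) (V j) (V j) (V i) = Rk (V i) (V j) (V j) (V i)
          + inner (T (V i) (V i)) (T (V j) (V j)) - inner (T (V j) (V i)) (T (V i) (V j))"
      using Gauss Vin ij by blast
    moreover have "T (V j) (V i) = T (V i) (V j)" using tsym ij by (simp add: t_def)
    ultimately show ?thesis by (simp add: t_def power2_norm_eq_inner)
  qed
  have csf_ij: "csf_curv c J (V i) (V j) (V j) (V i) = c/4 * (if i = j then 0 else 1) + 3*c/4 * q j i"
    if ij: "i \<in> {1..r}" "j \<in> {1..r}" for i j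
    using csf_diag[OF J_sq J_isom, of c "V i" "V j"] Vinner[OF ij] Vinner[OF ij(2) ij(2)] Vinner[OF ij(1) ij(1)]
    by (simp add: q_def inner_commute)
  have Q2q: "Q2 = (\<Sum>i\<in>{1..r}. \<Sum>j\<in>{1..r}. q i j)"
    unfolding Q2_def q_def using vpart_inner[OF Vs_sub] Vin by (intro sum.cong refl) auto
  have cnt: "(\<Sum>i\<in>{1..r}. \<Sum>j\<in>{1..r}. (if i = j then 0 else 1::real)) = rr\<^sup>2 - rr"
  proof -
    have "(\<Sum>j\<in>{1..r}. (if i = j then 0 else 1::real)) = rr - 1" if "i \<in> {1..r}" for i
    proof -
      have "(\<Sum>j\<in>{1..r}. (if i = j then 0 else 1::real)) = (\<Sum>j\<in>{1..r}. 1 - (if i = j then 1 else 0))"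
        by (intro sum.cong) auto
      also have "\<dots> = rr - 1" using that by (simp add: sum_subtractf rr_def)
      finally show ?thesis .
    qed
    then have "(\<Sum>i\<in>{1..r}. \<Sum>j\<in>{1..r}. (if i = j then 0 else 1::real)) = (\<Sum>i\<in>{1..r}. rr - 1)"
      by (intro sum.cong) auto
    also have "\<dots> = rr\<^sup>2 - rr" by (simp add: rr_def power2_eq_square algebra_simps)
    finally show ?thesis .
  qed
  have sumcsf: "(\<Sum>i\<in>{1..r}. \<Sum>j\<in>{1..r}. csf_curv c J (V i) (V j) (V j) (V i)) = c/4 * (rr\<^sup>2 - rr) + 3*c/4 * Q2"
  proof -
    have "(\<Sum>i\<in>{1..r}. \<Sum>j\<in>{1..r}. csf_curv c J (V i) (V j) (V j) (V i))
        = (\<Sum>i\<in>{1..r}. \<Sum>j\<in>{1..r}. c/4 * (if i = j then 0 else 1) + 3*c/4 * q j i)"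
      using csf_ij by (intro sum.cong refl) auto
    also have "\<dots> = c/4 * (\<Sum>i\<in>{1..r}. \<Sum>j\<in>{1..r}. (if i = j then 0 else 1::real)) + 3*c/4 * (\<Sum>i\<in>{1..r}. \<Sum>j\<in>{1..r}. q j i)"
      by (simp add: sum.distrib sum_distrib_left)
    also have "(\<Sum>i\<in>{1..r}. \<Sum>j\<in>{1..r}. q j i) = Q2" unfolding Q2q by (rule sum.swap)
    finally show ?thesis using cnt by simp
  qed
  have sumT: "(\<Sum>i\<in>{1..r}. \<Sum>j\<in>{1..r}. inner (t i i) (t j j)) = (norm S)\<^sup>2"
    by (simp add: S_def power2_norm_eq_inner inner_sum_left inner_sum_right) (rule sum.swap)
  have tau_eq: "tau = 1/2 * (c/4 * (rr\<^sup>2 - rr) + 3*c/4 * Q2 - (norm S)\<^sup>2 + N)"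
  proof -
    have "(\<Sum>i\<in>{1..r}. \<Sum>j\<in>{1..r}. Rk (V i) (V j) (V j) (V i))
       = (\<Sum>i\<in>{1..r}. \<Sum>j\<in>{1..r}. csf_curv c J (V i) (V j) (V j) (V i) - inner (t i i) (t j j) + (norm (t i j))\<^sup>2)"
      using Rk_ij by (intro sum.cong refl) auto
    also have "\<dots> = c/4 * (rr\<^sup>2 - rr) + 3*c/4 * Q2 - (norm S)\<^sup>2 + N"
      unfolding N_def sumcsf[symmetric] sumT[symmetric] by (simp add: sum.distrib sum_subtractf)
    finally show ?thesis by (simp add: tau_def)
  qed
  have K_eq: "K = c/4 + 3*c/4 * g\<^sup>2 - inner (t 1 1) (t 2 2) + (norm (t 1 2))\<^sup>2"
    using Rk_ij[OF i1 i2] csf_ij[OF i1 i2] by (simp add: K_def q_def g_def inner_commute)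
  have g_eq: "inner (V 1) (vpart Vs (J (V 2))) = g"
    using vpart_inner[OF Vs_sub Vin[OF i1], of "J (V 2)"] by (simp add: g_def inner_commute)
  have key: "tau - K - bound = D / 2"
  proof -
    have e1: "(rr\<^sup>2 * (rr - 2) / (rr - 1)) * (norm Hv)\<^sup>2 = (norm S)\<^sup>2 - (norm S)\<^sup>2 / (rr - 1)"
      using rr2 by (simp add: nH field_simps)
    show ?thesis unfolding tau_eq K_eq bound_def g_eq e1 D_def rr_def[symmetric]
      by (simp add: algebra_simps) (use rr2 in \<open>simp add: field_simps\<close>)
  qed
  have Dm: "D \<ge> 0 \<and> (D = 0 \<longleftrightarrow>
     ((\<forall>j\<in>{3..r}. t 1 j = 0 \<and> t 2 j = 0) \<and> (\<forall>i\<in>{3..r}. \<forall>j\<in>{3..r}. i \<noteq> j \<longrightarrow> t i j = 0)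
      \<and> (\<forall>j\<in>{3..r}. t 1 1 + t 2 2 = t j j)))"
    unfolding D_def N_def S_def by (rule deficit_main[OF r_gt tsym])
  have OS: "subspace (orthogonal_comp Vs)" by (rule subspace_orthogonal_comp)
  have lin1: "linear (T x)" for x using T_bil by (simp add: bilinear_def)
  have lin2: "linear (\<lambda>y. T y x)" for x using T_bil by (simp add: bilinear_def)
  have dir1: "condE Vs T r s Pl Hv" if D0: "D = 0"
  proof -
    have E1: "\<forall>j\<in>{3..r}. t 1 j = 0 \<and> t 2 j = 0" and E2: "\<forall>i\<in>{3..r}. \<forall>j\<in>{3..r}. i \<noteq> j \<longrightarrow> t i j = 0"
      and E3: "\<forall>j\<in>{3..r}. t 1 1 + t 2 2 = t j j"
      using Dm D0 by auto
    define A where "A = t 1 1 + t 2 2"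
    have SA: "S = A + (\<Sum>i\<in>{3..r}. t i i)" unfolding S_def A_def by (rule split12[OF r2])
    have "(\<Sum>i\<in>{3..r}. t i i) = (\<Sum>i\<in>{3..r}. A)" using E3 by (simp add: A_def)
    then have "S = A + real (r - 2) *\<^sub>R A" using SA by (simp add: sum_constant_scaleR)
    also have "\<dots> = (rr - 1) *\<^sub>R A" using r_gt by (simp add: rr_def of_nat_diff scaleR_diff_left scaleR_2)
    finally have SA2: "S = (rr - 1) *\<^sub>R A" .
    have HA: "A = (rr / (rr - 1)) *\<^sub>R Hv" using HS SA2 rr2 by simp
    have tin: "t i j \<in> orthogonal_comp Vs" if "i \<in> {1..r}" "j \<in> {1..r}" for i j
      using T_vert Vin that by (simp add: t_def)
    have Hin: "Hv \<in> orthogonal_comp Vs" unfolding HS S_def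
      using OS tin by (intro subspace_scale subspace_sum) auto
    obtain hb where hb: "onb hb s (orthogonal_comp Vs)" and hb1: "Hv \<noteq> 0 \<longrightarrow> hb 1 = (1 / norm Hv) *\<^sub>R Hv"
    proof (cases "Hv = 0")
      case True then show ?thesis using that h_onb by blast
    next
      case False
      have "(1/norm Hv) *\<^sub>R Hv \<in> orthogonal_comp Vs" using OS Hin by (rule subspace_scale)
      moreover have "norm ((1/norm Hv) *\<^sub>R Hv) = 1" using False by simp
      ultimately obtain B where "onb B (dim (orthogonal_comp Vs)) (orthogonal_comp Vs)" "B 1 = (1/norm Hv) *\<^sub>R Hv"
        using onb_first[OF OS] by blast
      then show ?thesis using that s_def by auto
    qed
    have Aperp: "inner A (hb l) = 0" if l: "l \<in> {2..s}" for l
    proof (cases "Hv = 0")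
      case True then show ?thesis using HA by simp
    next
      case False
      have Hn: "Hv = norm Hv *\<^sub>R hb 1" using hb1 False by simp
      have "inner (hb 1) (hb l) = 0" using onb_inner[OF hb, of 1 l] l by auto
      then have "inner Hv (hb l) = 0" by (subst Hn) simp
      then show ?thesis using HA by simp
    qed
    have C1: "\<forall>l\<in>{1..s}. \<forall>j\<in>{3..r}. inner (t 1 j) (hb l) = 0 \<and> inner (t 2 j) (hb l) = 0"
      using E1 by simp
    have C2: "\<forall>i\<in>{3..r}. \<forall>j\<in>{3..r}. i \<noteq> j \<longrightarrow> inner (t i j) (hb 1) = 0"
      using E2 by simp
    have C3: "\<forall>l\<in>{2..s}. \<forall>i\<in>{3..r}. \<forall>j\<in>{3..r}. inner (t i j) (hb l) = 0"
    proof (intro ballI)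
      fix l i j assume l: "l \<in> {2..s}" and i: "i \<in> {3..r}" and j: "j \<in> {3..r}"
      show "inner (t i j) (hb l) = 0"
      proof (cases "i = j")
        case True then show ?thesis using E3 j Aperp[OF l] by (simp add: A_def)
      next
        case False then show ?thesis using E2 i j by simp
      qed
    qed
    have C4: "\<forall>l\<in>{2..s}. inner (t 1 1) (hb l) + inner (t 2 2) (hb l) = 0"
      using Aperp by (simp add: A_def inner_add_left)
    have C5: "\<forall>j\<in>{3..r}. inner (t 1 1) (hb 1) + inner (t 2 2) (hb 1) = inner (t j j) (hb 1)"
      using E3 by (simp flip: inner_add_left)
    show ?thesis
      unfolding condE_def Let_def
      apply (rule exI[of _ V], rule exI[of _ hb])
      using V_onb hb Pi_def hb1 C1 C2 C3 C4 C5 unfolding t_def by simp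
  qed
  have dir2: "D = 0" if cE: "condE Vs T r s Pl Hv"
  proof -
    obtain Vb hb where Vb: "onb Vb r Vs" and hb: "onb hb s (orthogonal_comp Vs)" and spb: "span {Vb 1, Vb 2} = Pl"
      and c1: "\<forall>l\<in>{1..s}. \<forall>j\<in>{3..r}. inner (T (Vb 1) (Vb j)) (hb l) = 0 \<and> inner (T (Vb 2) (Vb j)) (hb l) = 0"
      and c2: "\<forall>i\<in>{3..r}. \<forall>j\<in>{3..r}. i \<noteq> j \<longrightarrow> inner (T (Vb i) (Vb j)) (hb 1) = 0"
      and c3: "\<forall>l\<in>{2..s}. \<forall>i\<in>{3..r}. \<forall>j\<in>{3..r}. inner (T (Vb i) (Vb j)) (hb l) = 0"
      and c4: "\<forall>l\<in>{2..s}. inner (T (Vb 1) (Vb 1)) (hb l) + inner (T (Vb 2) (Vb 2)) (hb l) = 0"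
      and c5: "\<forall>j\<in>{3..r}. inner (T (Vb 1) (Vb 1)) (hb 1) + inner (T (Vb 2) (Vb 2)) (hb 1) = inner (T (Vb j) (Vb j)) (hb 1)"
      using cE unfolding condE_def Let_def by blast
    define tb where "tb i j = T (Vb i) (Vb j)" for i j
    have Vbin: "Vb i \<in> Vs" if "i \<in> {1..r}" for i using Vb that by (rule onb_in)
    have tbsym: "\<forall>i\<in>{1..r}. \<forall>j\<in>{1..r}. tb i j = tb j i" using T_vert Vbin by (auto simp: tb_def)
    have tbin: "tb i j \<in> orthogonal_comp Vs" if "i \<in> {1..r}" "j \<in> {1..r}" for i j
      using T_vert Vbin that by (simp add: tb_def)
    have zero: "x = 0" if x: "x \<in> orthogonal_comp Vs" and xl: "\<forall>l\<in>{1..s}. inner x (hb l) = 0" for x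
      using onb_expand[OF hb OS x] xl by simp
    have lc: "l = 1 \<or> l \<in> {2..s}" if "l \<in> {1..s}" for l using that by auto
    have j3: "j \<in> {1..r}" if "j \<in> {3..r}" for j using that by auto
    have E1: "\<forall>j\<in>{3..r}. tb 1 j = 0 \<and> tb 2 j = 0"
    proof
      fix j assume j: "j \<in> {3..r}"
      show "tb 1 j = 0 \<and> tb 2 j = 0"
        using zero[OF tbin[OF i1 j3[OF j]]] zero[OF tbin[OF i2 j3[OF j]]] c1 j by (simp add: tb_def)
    qed
    have E2: "\<forall>i\<in>{3..r}. \<forall>j\<in>{3..r}. i \<noteq> j \<longrightarrow> tb i j = 0"
    proof (intro ballI impI)
      fix i j assume i: "i \<in> {3..r}" and j: "j \<in> {3..r}" and ij: "i \<noteq> j"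
      have "\<forall>l\<in>{1..s}. inner (tb i j) (hb l) = 0"
      proof
        fix l assume "l \<in> {1..s}"
        from lc[OF this] show "inner (tb i j) (hb l) = 0"
        proof
          assume "l = 1" then show ?thesis using c2 i j ij by (simp add: tb_def)
        next
          assume "l \<in> {2..s}" then show ?thesis using c3 i j by (simp add: tb_def)
        qed
      qed
      then show "tb i j = 0" using zero[OF tbin[OF j3[OF i] j3[OF j]]] by simp
    qed
    have E3: "\<forall>j\<in>{3..r}. tb 1 1 + tb 2 2 = tb j j"
    proof
      fix j assume j: "j \<in> {3..r}"
      have xin: "tb 1 1 + tb 2 2 - tb j j \<in> orthogonal_comp Vs"
        using OS tbin i1 i2 j3[OF j] by (intro subspace_diff subspace_add) auto
      have "\<forall>l\<in>{1..s}. inner (tb 1 1 + tb 2 2 - tb j j) (hb l) = 0"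
      proof
        fix l assume "l \<in> {1..s}"
        from lc[OF this] show "inner (tb 1 1 + tb 2 2 - tb j j) (hb l) = 0"
        proof
          assume "l = 1" then show ?thesis using c5 j by (simp add: tb_def inner_add_left inner_diff_left)
        next
          assume l: "l \<in> {2..s}"
          have "inner (tb j j) (hb l) = 0" using c3 l j by (simp add: tb_def)
          then show ?thesis using c4 l by (simp add: tb_def inner_add_left inner_diff_left)
        qed
      qed
      then show "tb 1 1 + tb 2 2 = tb j j" using zero[OF xin] by simp
    qed
    have Db: "(\<Sum>i\<in>{1..r}. \<Sum>j\<in>{1..r}. (norm (tb i j))\<^sup>2) + 2 * inner (tb 1 1) (tb 2 2) - 2 * (norm (tb 1 2))\<^sup>2
           - (norm (\<Sum>i\<in>{1..r}. tb i i))\<^sup>2 / (real r - 1) = 0"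
      using deficit_main[OF r_gt tbsym] E1 E2 E3 by blast
    have Nb: "(\<Sum>i\<in>{1..r}. \<Sum>j\<in>{1..r}. (norm (tb i j))\<^sup>2) = N"
    proof -
      have "(\<Sum>i\<in>{1..r}. \<Sum>j\<in>{1..r}. (norm (tb i j))\<^sup>2) = (\<Sum>i\<in>{1..r}. \<Sum>j\<in>{1..r}. (norm (T (Vb i) (V j)))\<^sup>2)"
        unfolding tb_def by (intro sum.cong refl vec_sq_inv[OF Vb V_onb Vs_sub lin1])
      also have "\<dots> = (\<Sum>j\<in>{1..r}. \<Sum>i\<in>{1..r}. (norm (T (Vb i) (V j)))\<^sup>2)" by (rule sum.swap)
      also have "\<dots> = (\<Sum>j\<in>{1..r}. \<Sum>i\<in>{1..r}. (norm (T (V i) (V j)))\<^sup>2)"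
      proof (rule sum.cong[OF refl])
        fix j assume "j \<in> {1..r}"
        show "(\<Sum>i\<in>{1..r}. (norm (T (Vb i) (V j)))\<^sup>2) = (\<Sum>i\<in>{1..r}. (norm (T (V i) (V j)))\<^sup>2)"
          using vec_sq_inv[OF Vb V_onb Vs_sub lin2[of "V j"]] by simp
      qed
      also have "\<dots> = N" unfolding N_def t_def by (rule sum.swap)
      finally show ?thesis .
    qed
    have Sb: "(\<Sum>i\<in>{1..r}. tb i i) = S"
      unfolding tb_def S_def t_def by (rule trace_inv[OF Vb V_onb Vs_sub T_bil])
    have s12: "{1..2::nat} = {1, 2}" by auto
    have V2: "onb V 2 Pl"
      unfolding onb_def Pi_def s12 using Vinner[OF i1 i2] Vinner[OF i1 i1] Vinner[OF i2 i2] Vinner[OF i2 i1]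
      by (auto intro: span_base)
    have Plsub: "subspace Pl" unfolding Pi_def by (rule subspace_span)
    have b1in: "Vb 1 \<in> Pl" and b2in: "Vb 2 \<in> Pl" unfolding spb[symmetric] by (auto intro: span_base)
    define a where "a = inner (Vb 1) (V 1)"
    define b where "b = inner (Vb 1) (V 2)"
    define c' where "c' = inner (Vb 2) (V 1)"
    define d where "d = inner (Vb 2) (V 2)"
    have e1: "Vb 1 = a *\<^sub>R V 1 + b *\<^sub>R V 2"
      using onb_expand[OF V2 Plsub b1in] unfolding s12 by (simp add: a_def b_def)
    have e2: "Vb 2 = c' *\<^sub>R V 1 + d *\<^sub>R V 2"
      using onb_expand[OF V2 Plsub b2in] unfolding s12 by (simp add: c'_def d_def)
    have o11: "a * a + b * b = 1"
      using onb_parseval[OF V2 Plsub b1in, of "Vb 1"] onb_inner[OF Vb i1 i1] unfolding s12 by (simp add: a_def b_def)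
    have o22: "c' * c' + d * d = 1"
      using onb_parseval[OF V2 Plsub b2in, of "Vb 2"] onb_inner[OF Vb i2 i2] unfolding s12 by (simp add: c'_def d_def)
    have o12: "a * c' + b * d = 0"
      using onb_parseval[OF V2 Plsub b1in, of "Vb 2"] onb_inner[OF Vb i1 i2] unfolding s12 by (simp add: a_def b_def c'_def d_def)
    have det: "(a * d - b * c')\<^sup>2 = 1"
    proof -
      have "(a * d - b * c')\<^sup>2 = (a * a + b * b) * (c' * c' + d * d) - (a * c' + b * d)\<^sup>2"
        by (simp add: power2_eq_square algebra_simps)
      then show ?thesis using o11 o22 o12 by simp
    qed
    have sy12: "T (V 2) (V 1) = T (V 1) (V 2)" using T_vert Vin[OF i1] Vin[OF i2] by simp
    have plane: "inner (tb 1 1) (tb 2 2) - (norm (tb 1 2))\<^sup>2 = inner (t 1 1) (t 2 2) - (norm (t 1 2))\<^sup>2"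
      using plane_inv[OF T_bil sy12, of a b c' d] det unfolding tb_def t_def e1[symmetric] e2[symmetric] by simp
    show "D = 0" using Db[unfolded Sb Nb] plane unfolding D_def by linarith
  qed
  have condE_iff: "condE Vs T r s Pl Hv \<longleftrightarrow> D = 0" using dir1 dir2 by blast
  show ?thesis
    unfolding Let_def Hv_def[symmetric] Q2_def[symmetric] tau_def[symmetric] K_def[symmetric] rr_def[symmetric]
      bound_def[symmetric]
    using key Dm condE_iff by auto
qed

end
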